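(* Let $F:\mathbb{R}^p\to\mathbb{R}^p$ be single-valued and $L$-Lipschitz continuous and $T:\mathbb{R}^p\rightrightarrows\mathbb{R}^p$ be maximally $3$-cyclically monotone, $\Phi:=F+T$, with $\mathrm{zer}\,\Phi\neq\emptyset$. Let $\tau>1$, $\eta>0$, and let $\{(x^k,y^k)\}$ be generated by the golden-ratio scheme: start from $x^0\in\mathrm{dom}\,\Phi$, set $y^{-1}:=x^0$, and for $k\ge0$ $$y^k:=\tfrac{\tau-1}{\tau}x^k+\tfrac1\tau y^{k-1},\qquad x^{k+1}:=J_{\eta T}(y^k-\eta Fx^k).$$ Then for any $x^\star\in\mathrm{zer}\,\Phi$, any $\gamma>0$ and every $k\ge1$, $$\begin{aligned}&\tau\|y^{k+1}-x^\star\|^2+(\tau-1)(\tau-\gamma)\|x^{k+1}-x^k\|^2\le\tau\|y^k-x^\star\|^2+\tfrac{(\tau-1)L^2\eta^2}{\gamma}\|x^k-x^{k-1}\|^2\\&\quad-\tfrac{(\tau-1)(1-\tau^2+\tau)}{\tau}\|x^{k+1}-y^k\|^2-\tau(\tau-1)\|x^k-y^k\|^2-2\eta(\tau-1)\langle Fx^k-Fx^\star,x^k-x^\star\rangle.\end{aligned}$$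
   Context: $J_{\eta T}:=(\mathbb{I}+\eta T)^{-1}$ is the resolvent of $\eta T$; $\mathrm{zer}\,\Phi:=\{x:0\in Fx+Tx\}$. $T$ is $3$-cyclically monotone if $\sum_{i=1}^3\langle u^i,x^i-x^{i+1}\rangle\ge0$ for all $(x^i,u^i)\in\mathrm{gra}\,T$ with $x^4=x^1$; maximally so if its graph is not properly contained in that of another $3$-cyclically monotone operator. $F$ is $L$-Lipschitz if $\|Fx-Fy\|\le L\|x-y\|$. The range $k\ge1$ is where $x^{k-1}$ is defined by the scheme. *)

theory Defs
  imports "HOL-Analysis.Analysis"
begin

definition gra :: "('a \<Rightarrow> 'b set) \<Rightarrow> ('a \<times> 'b) set" where
  "gra T = {(x, u). u \<in> T x}"

definition dom_op :: "('a \<Rightarrow> 'b set) \<Rightarrow> 'a set" where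
  "dom_op T = {x. T x \<noteq> {}}"

definition cyc3_mono_graph :: "('a::real_inner \<times> 'a) set \<Rightarrow> bool" where
  "cyc3_mono_graph G \<longleftrightarrow>
     (\<forall>x1 u1 x2 u2 x3 u3. (x1, u1) \<in> G \<longrightarrow> (x2, u2) \<in> G \<longrightarrow> (x3, u3) \<in> G \<longrightarrow>
        inner u1 (x1 - x2) + inner u2 (x2 - x3) + inner u3 (x3 - x1) \<ge> 0)"

definition cyc3_monotone :: "('a::real_inner \<Rightarrow> 'a set) \<Rightarrow> bool" where
  "cyc3_monotone T \<longleftrightarrow> cyc3_mono_graph (gra T)"

definition max_cyc3_monotone :: "('a::real_inner \<Rightarrow> 'a set) \<Rightarrow> bool" where
  "max_cyc3_monotone T \<longleftrightarrow> cyc3_monotone T \<and>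
     (\<forall>S. cyc3_monotone S \<and> gra T \<subseteq> gra S \<longrightarrow> gra S = gra T)"

text \<open>Resolvent J_{eta T} = (I + eta T)^{-1}, as a set-valued map:
  x \<in> J v  iff  v \<in> x + eta T x.\<close>
definition resolvent :: "real \<Rightarrow> ('a::real_vector \<Rightarrow> 'a set) \<Rightarrow> 'a \<Rightarrow> 'a set" where
  "resolvent \<eta> T v = {x. \<exists>u \<in> T x. v = x + \<eta> *\<^sub>R u}"

definition zer_sum :: "('a \<Rightarrow> 'a::real_vector) \<Rightarrow> ('a \<Rightarrow> 'a set) \<Rightarrow> 'a set" where
  "zer_sum F T = {x. \<exists>u \<in> T x. F x + u = 0}"

end

theory Submission
  imports Defs
begin

lemma ident:
  fixes a b yk s :: "'a::real_inner" and t :: real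
  assumes t: "t > 0"
  shows "t * (norm (((t-1)/t) *\<^sub>R a + (1/t) *\<^sub>R yk - s))\<^sup>2 + t*(t-1)*(norm (a-b))\<^sup>2
     - t*(norm (yk - s))\<^sup>2 + (t-1)*(1-t\<^sup>2+t)/t*(norm (a-yk))\<^sup>2 + t*(t-1)*(norm (b-yk))\<^sup>2
     + 2*(t-1)*(inner (yk - a) (a - s) + inner ((t *\<^sub>R yk - (t-1) *\<^sub>R b) - b) (b - a)) = 0"
proof -
  define p q r where "p = a - s" and "q = b - s" and "r = yk - s"
  have e1: "((t-1)/t) *\<^sub>R a + (1/t) *\<^sub>R yk - s = ((t-1)/t) *\<^sub>R p + (1/t) *\<^sub>R r"
  proof -
    have h: "1/t + (t-1)/t = 1" using t by (simp add: field_simps)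
    have "((t-1)/t) *\<^sub>R p + (1/t) *\<^sub>R r = ((t-1)/t) *\<^sub>R a + (1/t) *\<^sub>R yk - (1/t + (t-1)/t) *\<^sub>R s"
      unfolding p_def r_def by (simp add: algebra_simps)
    then show ?thesis using h by simp
  qed
  have e2: "(t *\<^sub>R yk - (t-1) *\<^sub>R b) - b = t *\<^sub>R (r - q)"
    unfolding q_def r_def by (simp add: algebra_simps)
  have e3: "a - b = p - q" "yk - s = r" "a - yk = p - r" "b - yk = q - r" "yk - a = r - p" "a - s = p" "b - a = q - p"
    unfolding p_def q_def r_def by (auto simp: algebra_simps)
  show ?thesis unfolding e1 e2 e3 using t
    by (simp add: power2_norm_eq_inner inner_simps inner_commute field_simps) (simp add: algebra_simps power2_eq_square)
qed


lemma final_arith: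
  fixes t eta gam L N1 A Nk Nay Nby C G H B :: real
  assumes t: "t > 1" and g: "gam > 0"
    and Id: "t*N1 + t*(t-1)*A - t*Nk + (t-1)*(1-t\<^sup>2+t)/t*Nay + t*(t-1)*Nby + 2*(t-1)*C = 0"
    and Cyc: "C - eta*G - eta*H \<ge> 0"
    and Y: "2*eta*H \<ge> - gam*A - L\<^sup>2*eta\<^sup>2/gam*B"
  shows "t*N1 + (t-1)*(t-gam)*A \<le> t*Nk + (t-1)*L\<^sup>2*eta\<^sup>2/gam*B - (t-1)*(1-t\<^sup>2+t)/t*Nay
      - t*(t-1)*Nby - 2*eta*(t-1)*G"
proof -
  have 1: "(t-1)*(C - eta*G - eta*H) \<ge> 0" using t Cyc by simp
  have 2: "(t-1)*(2*eta*H + gam*A + L\<^sup>2*eta\<^sup>2/gam*B) \<ge> 0" using t Y by simp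
  have e: "(t-1)*L\<^sup>2*eta\<^sup>2/gam*B = (t-1)*(L\<^sup>2*eta\<^sup>2/gam*B)" by simp
  have e2: "(t-1)*(1-t\<^sup>2+t)/t*Nay = (t-1)*((1-t\<^sup>2+t)/t*Nay)" by simp
  show ?thesis using Id 1 2 unfolding e e2 by (simp add: algebra_simps)
qed

lemma young_part:
  fixes F :: "'a::real_inner \<Rightarrow> 'a" and a b c :: 'a
  assumes Lip: "L-lipschitz_on UNIV F" and eta: "eta > 0" and g: "gam > 0"
  shows "2*eta*inner (F b - F c) (a - b) \<ge> - gam*(norm (a-b))\<^sup>2 - L\<^sup>2*eta\<^sup>2/gam*(norm (b-c))\<^sup>2"
proof -
  have l: "norm (F b - F c) \<le> L * norm (b - c)"
    using Lip by (metis UNIV_I dist_norm lipschitz_on_def)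
  define X where "X = eta * L * norm (b - c)"
  define Yv where "Yv = norm (a - b)"
  have "\<bar>inner (F b - F c) (a - b)\<bar> \<le> norm (F b - F c) * norm (a - b)"
    by (rule Cauchy_Schwarz_ineq2)
  also have "\<dots> \<le> L * norm (b - c) * norm (a - b)"
    by (rule mult_right_mono[OF l]) simp
  finally have ab: "\<bar>inner (F b - F c) (a - b)\<bar> \<le> L * norm (b - c) * norm (a - b)" .
  have "- (2*eta*inner (F b - F c) (a - b)) \<le> 2 * X * Yv"
  proof -
    have "- (2*eta*inner (F b - F c) (a - b)) \<le> 2*eta*\<bar>inner (F b - F c) (a - b)\<bar>"
      using eta mult_left_mono[OF abs_ge_minus_self[of "inner (F b - F c) (a - b)"], of "2*eta"] by simp
    also have "\<dots> \<le> 2*eta*(L * norm (b - c) * norm (a - b))" using ab eta by simp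
    finally show ?thesis unfolding X_def Yv_def by (simp add: algebra_simps)
  qed
  moreover have "2 * X * Yv \<le> gam * Yv\<^sup>2 + X\<^sup>2/gam"
  proof -
    have "0 \<le> (gam*Yv - X)\<^sup>2" by simp
    hence "2 * X * Yv * gam \<le> gam * Yv\<^sup>2 * gam + X\<^sup>2" by (simp add: power2_eq_square algebra_simps)
    hence "2 * X * Yv \<le> (gam * Yv\<^sup>2 * gam + X\<^sup>2) / gam" using g by (simp add: le_divide_eq)
    also have "(gam * Yv\<^sup>2 * gam + X\<^sup>2) / gam = gam * Yv\<^sup>2 + X\<^sup>2/gam" using g by (simp add: add_divide_distrib)
    finally show ?thesis .
  qed
  moreover have "X\<^sup>2/gam = L\<^sup>2*eta\<^sup>2/gam*(norm (b-c))\<^sup>2" unfolding X_def by (simp add: power_mult_distrib)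
  ultimately show ?thesis unfolding Yv_def by linarith
qed

theorem lemma9:
  fixes F :: "real^'p \<Rightarrow> real^'p" and T :: "real^'p \<Rightarrow> (real^'p) set"
    and L \<tau> \<eta> \<gamma> :: real and x y :: "nat \<Rightarrow> real^'p" and xs :: "real^'p" and k :: nat
  assumes Lip: "L-lipschitz_on UNIV F"
    and maxT: "max_cyc3_monotone T"
    and zer_ne: "zer_sum F T \<noteq> {}"
    and tau: "\<tau> > 1" and eta: "\<eta> > 0"
    and x0: "x 0 \<in> dom_op T"
    and y0: "y 0 = ((\<tau> - 1) / \<tau>) *\<^sub>R x 0 + (1 / \<tau>) *\<^sub>R x 0"
    and ystep: "\<And>n. y (Suc n) = ((\<tau> - 1) / \<tau>) *\<^sub>R x (Suc n) + (1 / \<tau>) *\<^sub>R y n"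
    and xstep: "\<And>n. x (Suc n) \<in> resolvent \<eta> T (y n - \<eta> *\<^sub>R F (x n))"
    and xs: "xs \<in> zer_sum F T"
    and gam: "\<gamma> > 0"
    and k: "k \<ge> 1"
  shows "\<tau> * (norm (y (k+1) - xs))\<^sup>2 + (\<tau> - 1) * (\<tau> - \<gamma>) * (norm (x (k+1) - x k))\<^sup>2
    \<le> \<tau> * (norm (y k - xs))\<^sup>2 + (\<tau> - 1) * L\<^sup>2 * \<eta>\<^sup>2 / \<gamma> * (norm (x k - x (k-1)))\<^sup>2
       - (\<tau> - 1) * (1 - \<tau>\<^sup>2 + \<tau>) / \<tau> * (norm (x (k+1) - y k))\<^sup>2
       - \<tau> * (\<tau> - 1) * (norm (x k - y k))\<^sup>2
       - 2 * \<eta> * (\<tau> - 1) * inner (F (x k) - F xs) (x k - xs)"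
proof -
  obtain m where m: "k = Suc m" using k by (cases k) auto
  define a b c s where "a = x (k+1)" and "b = x k" and "c = x (k-1)" and "s = xs"
  have km: "k - 1 = m" using m by simp
  obtain u where u: "u \<in> T a" and ue: "y k - \<eta> *\<^sub>R F b = a + \<eta> *\<^sub>R u"
    using xstep[of k] unfolding resolvent_def a_def b_def by auto
  obtain v where v: "v \<in> T b" and ve: "y (k-1) - \<eta> *\<^sub>R F c = b + \<eta> *\<^sub>R v"
    using xstep[of m] unfolding resolvent_def b_def c_def m km by auto
  obtain w where w: "w \<in> T s" and we: "F s + w = 0"
    using xs unfolding zer_sum_def s_def by auto
  have cm: "cyc3_mono_graph (gra T)" using maxT unfolding max_cyc3_monotone_def cyc3_monotone_def by simp
  have cyc: "inner u (a - s) + inner w (s - b) + inner v (b - a) \<ge> 0"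
    using cm u v w unfolding cyc3_mono_graph_def gra_def by blast
  have yk: "y k = ((\<tau> - 1) / \<tau>) *\<^sub>R b + (1 / \<tau>) *\<^sub>R y (k-1)"
    using ystep[of m] unfolding b_def m km by simp
  have yk1: "y (k-1) = \<tau> *\<^sub>R y k - (\<tau> - 1) *\<^sub>R b"
  proof -
    have "\<tau> *\<^sub>R y k = (\<tau> * ((\<tau> - 1) / \<tau>)) *\<^sub>R b + (\<tau> * (1 / \<tau>)) *\<^sub>R y (k-1)"
      unfolding yk by (simp add: scaleR_add_right)
    also have "\<dots> = (\<tau> - 1) *\<^sub>R b + y (k-1)" using tau by simp
    finally show ?thesis by (simp add: algebra_simps)
  qed
  have yk1': "y (k+1) = ((\<tau> - 1) / \<tau>) *\<^sub>R a + (1 / \<tau>) *\<^sub>R y k"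
    using ystep[of k] unfolding a_def by simp
  have eu: "\<eta> *\<^sub>R u = y k - \<eta> *\<^sub>R F b - a" using ue by (simp add: algebra_simps)
  have ev: "\<eta> *\<^sub>R v = (\<tau> *\<^sub>R y k - (\<tau> - 1) *\<^sub>R b) - \<eta> *\<^sub>R F c - b" using ve yk1 by (simp add: algebra_simps)
  have ew: "w = - F s" using we by (metis add.commute add_eq_0_iff)
  define C where "C = inner (y k - a) (a - s) + inner ((\<tau> *\<^sub>R y k - (\<tau> - 1) *\<^sub>R b) - b) (b - a)"
  define G where "G = inner (F b - F s) (b - s)"
  define H where "H = inner (F b - F c) (a - b)"
  have "\<eta> * (inner u (a - s) + inner w (s - b) + inner v (b - a))
     = inner (\<eta> *\<^sub>R u) (a - s) + inner (\<eta> *\<^sub>R w) (s - b) + inner (\<eta> *\<^sub>R v) (b - a)"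
    by (simp add: algebra_simps)
  also have "\<dots> = C - \<eta> * G - \<eta> * H"
    unfolding eu ev ew C_def G_def H_def by (simp add: inner_simps algebra_simps)
  finally have Cyc: "C - \<eta> * G - \<eta> * H \<ge> 0" using cyc eta by (metis mult_nonneg_nonneg less_imp_le)
  have Id: "\<tau> * (norm (y (k+1) - s))\<^sup>2 + \<tau>*(\<tau>-1)*(norm (a-b))\<^sup>2
     - \<tau>*(norm (y k - s))\<^sup>2 + (\<tau>-1)*(1-\<tau>\<^sup>2+\<tau>)/\<tau>*(norm (a-y k))\<^sup>2 + \<tau>*(\<tau>-1)*(norm (b-y k))\<^sup>2
     + 2*(\<tau>-1)*C = 0"
    unfolding yk1' C_def by (rule ident) (use tau in simp)
  have Y: "2*\<eta>*H \<ge> - \<gamma>*(norm (a-b))\<^sup>2 - L\<^sup>2*\<eta>\<^sup>2/\<gamma>*(norm (b-c))\<^sup>2"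
    unfolding H_def by (rule young_part[OF Lip eta gam])
  have nb: "norm (b - y k) = norm (x k - y k)" unfolding b_def ..
  have "\<tau> * (norm (y (k+1) - s))\<^sup>2 + (\<tau> - 1) * (\<tau> - \<gamma>) * (norm (a - b))\<^sup>2
    \<le> \<tau> * (norm (y k - s))\<^sup>2 + (\<tau> - 1) * L\<^sup>2 * \<eta>\<^sup>2 / \<gamma> * (norm (b - c))\<^sup>2
       - (\<tau> - 1) * (1 - \<tau>\<^sup>2 + \<tau>) / \<tau> * (norm (a - y k))\<^sup>2
       - \<tau> * (\<tau> - 1) * (norm (b - y k))\<^sup>2
       - 2 * \<eta> * (\<tau> - 1) * G"
    by (rule final_arith[OF tau gam Id Cyc Y])
  then show ?thesis unfolding a_def b_def c_def s_def G_def .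
qed

end
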